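(* Let $n\geq 1$ and let $r,k\in\mathbf{Z}$ with $r\geq 1$. Then \begin{align*} \tilde{A}_{n}^{(r,k)}(x)&=x\tilde{A}_{n-1}^{(r,k)}(x-1)+r\sum_{a=0}^{n-1}\frac{(-1)^{a+1}a!}{a+2}\binom{n-1}{a}\tilde{A}_{n-1-a}^{(r+1,k)}(x)\\ &\quad +\frac{1}{n}\left(\tilde{A}_{n}^{(r+1,k-1)}(x)-\tilde{A}_{n}^{(r+1,k)}(x)\right). \end{align*}
   Context: For $k\in\mathbf{Z}$, $Lif_{k}(x)=\sum_{m=0}^{\infty}\frac{x^{m}}{m!(m+1)^{k}}$. For integers $r\geq 0$, $k\in\mathbf{Z}$, the polynomials $\tilde{A}_{n}^{(r,k)}(x)$ are defined by \[\left(\frac{t}{(1+t)\log(1+t)}\right)^{r}Lif_{k}\left(-\log(1+t)\right)(1+t)^{x}=\sum_{n=0}^{\infty}\tilde{A}_{n}^{(r,k)}(x)\frac{t^{n}}{n!}.\] *)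

theory Defs
  imports Complex_Main "HOL-Computational_Algebra.Formal_Power_Series"
begin

definition Lif_fps :: "int \<Rightarrow> real fps" where
  "Lif_fps k = Abs_fps (\<lambda>m. 1 / (fact m * (of_nat (m + 1)) powi k))"

definition Atilde_gf :: "nat \<Rightarrow> int \<Rightarrow> real \<Rightarrow> real fps" where
  "Atilde_gf r k x =
     (fps_X / ((1 + fps_X) * fps_ln 1)) ^ r * (Lif_fps k oo (- fps_ln 1)) * fps_binomial x"

definition Atilde :: "nat \<Rightarrow> nat \<Rightarrow> int \<Rightarrow> real \<Rightarrow> real" where
  "Atilde n r k x = fact n * fps_nth (Atilde_gf r k x) n"

end

theory Submission
  imports Defs
begin

abbreviation "LL \<equiv> (fps_ln 1 :: real fps)"
abbreviation "PP \<equiv> (fps_X / ((1 + fps_X) * fps_ln 1) :: real fps)"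

lemma hP: "PP * ((1 + fps_X) * LL) = fps_X"
proof (rule fps_times_divide_eq)
  have l1: "fps_nth LL (Suc 0) = 1" by (simp add: fps_ln_nth)
  have c1: "fps_nth ((1 + fps_X) * LL) 1 = 1"
    by (simp add: fps_mult_nth l1)
  thus "(1 + fps_X) * LL \<noteq> 0" by (metis fps_zero_nth zero_neq_one)
  have "subdegree ((1 + fps_X) * LL) \<le> 1" by (rule subdegree_leI) (simp add: c1 l1 fps_mult_nth)
  thus "subdegree ((1 + fps_X) * LL) \<le> subdegree (fps_X :: real fps)" by simp
qed

lemma hI: "(1 + fps_X) * inverse (1 + fps_X :: real fps) = 1"
  by (rule inverse_mult_eq_1') simp

lemma hLd: "fps_deriv LL = inverse (1 + fps_X)"
  by (simp add: fps_ln_deriv)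

lemma hB: "fps_binomial x = (1 + fps_X) * fps_binomial (x - 1 :: real)"
  using fps_binomial_add_mult[of 1 "x-1"] by (simp add: fps_binomial_1)

lemma hBd: "fps_deriv (fps_binomial x) = fps_const x * fps_binomial (x - 1 :: real)"
proof -
  have "fps_deriv (fps_binomial x) = fps_const x * fps_binomial (x-1) * ((1 + fps_X) * inverse (1+fps_X))"
    by (subst fps_binomial_deriv, subst hB) (simp add: fps_divide_unit mult.assoc mult.left_commute)
  thus ?thesis by (simp add: hI)
qed

lemma alg1: fixes P X L :: "'a::comm_ring_1"
  assumes "P * ((1+X)*L) = X" shows "X^2*(1-P*L-P) = P^2*(L-X)*((1+X)*L)"
proof -
  have "X^2*(1-P*L-P) = X*(P*((1+X)*L)) - X^2*P*L - X^2*P" using assms by (simp add: power2_eq_square algebra_simps)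
  also have "\<dots> = P*X*L - P*X^2" by (simp add: power2_eq_square algebra_simps)
  also have "\<dots> = P*(L-X)*(P*((1+X)*L))" using assms by (simp add: power2_eq_square algebra_simps)
  also have "\<dots> = P^2*(L-X)*((1+X)*L)" by (simp add: power2_eq_square algebra_simps)
  finally show ?thesis .
qed

lemma alg2: fixes P D L e :: "'a::comm_ring_1"
  assumes "D * Q + P * L + P * h = 1" "h = 1" shows "D * Q = 1 - P*L - P"
proof -
  have "D * Q + (P * L + P) = 1" using assms by (simp add: add.assoc)
  thus ?thesis by (simp add: eq_diff_eq[symmetric] diff_diff_eq)
qed

lemma hPd: "fps_X^2 * fps_deriv PP = PP^2 * (LL - fps_X)"
proof -
  have "fps_deriv (PP * ((1 + fps_X) * LL)) = 1" by (simp add: hP)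
  hence e: "fps_deriv PP * ((1 + fps_X) * LL) + PP * LL + PP * ((1+fps_X) * fps_deriv LL) = 1"
    by (simp add: algebra_simps)
  have h1: "(1+fps_X) * fps_deriv LL = 1" by (simp add: hLd hI)
  have e2: "fps_deriv PP * ((1 + fps_X) * LL) = 1 - PP * LL - PP"
    by (rule alg2[OF e h1])
  have nz: "(1 + fps_X) * LL \<noteq> 0" using hP by auto
  have "(fps_X^2 * fps_deriv PP) * ((1 + fps_X) * LL) = (PP^2 * (LL - fps_X)) * ((1 + fps_X) * LL)"
  proof -
    have "(fps_X^2 * fps_deriv PP) * ((1 + fps_X) * LL) = fps_X^2 * (1 - PP * LL - PP)"
      by (simp add: e2 mult.assoc)
    also have "\<dots> = (PP^2 * (LL - fps_X)) * ((1 + fps_X) * LL)"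
      using alg1[OF hP] by simp
    finally show ?thesis .
  qed
  thus ?thesis using nz by simp
qed

lemma ring_main:
  fixes X P Pd L D C Cm B Bm I xc R :: "'a::comm_ring_1"
  assumes h1: "X^2*Pd = P^2*(L-X)" and h2: "X*P*L = X^2*I" and h3: "(-L)*D = Cm - C"
  shows "X^2 * (R * Pd * P^s * C * B + P^(Suc s) * (D * (-I)) * B + P^(Suc s) * C * (xc * Bm))
       = xc * X^2 * (P^(Suc s) * C * Bm) + R * (L - X) * (P^(Suc (Suc s)) * C * B)
         + X * (P^(Suc (Suc s)) * Cm * B - P^(Suc (Suc s)) * C * B)"
proof -
  have t1: "X^2*(R*Pd*P^s*C*B) = R*(L-X)*(P^(Suc(Suc s))*C*B)"
  proof -
    have "X^2*(R*Pd*P^s*C*B) = R*P^s*C*B*(X^2*Pd)" by (simp add: ac_simps)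
    also have "\<dots> = R*P^s*C*B*(P^2*(L-X))" by (simp add: h1)
    also have "\<dots> = R*(L-X)*(P^(Suc(Suc s))*C*B)" by (simp add: power2_eq_square ac_simps)
    finally show ?thesis .
  qed
  have t2: "X^2*(P^(Suc s)*(D*(-I))*B) = X*(P^(Suc (Suc s))*Cm*B - P^(Suc(Suc s))*C*B)"
  proof -
    have "X^2*(P^(Suc s)*(D*(-I))*B) = -(P^(Suc s)*D*B)*(X^2*I)" by (simp add: ac_simps)
    also have "\<dots> = -(P^(Suc s)*D*B)*(X*P*L)" by (simp add: h2)
    also have "\<dots> = X*P^(Suc(Suc s))*B*((-L)*D)" by (simp add: ac_simps)
    also have "\<dots> = X*P^(Suc(Suc s))*B*(Cm - C)" by (simp only: h3)
    also have "\<dots> = X*(P^(Suc (Suc s))*Cm*B - P^(Suc(Suc s))*C*B)" by (simp add: algebra_simps)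
    finally show ?thesis .
  qed
  have t3: "X^2*(P^(Suc s) * C * (xc * Bm)) = xc * X^2 * (P^(Suc s) * C * Bm)" by (simp add: ac_simps)
  show ?thesis unfolding distrib_left t1 t2 t3 by (simp add: ac_simps)
qed

lemma hLif: "fps_X * fps_deriv (Lif_fps k) = Lif_fps (k-1) - Lif_fps k"
proof (rule fps_ext)
  fix m
  show "fps_nth (fps_X * fps_deriv (Lif_fps k)) m = fps_nth (Lif_fps (k-1) - Lif_fps k) m"
  proof (cases m)
    case 0 thus ?thesis by (simp add: Lif_fps_def)
  next
    case (Suc j)
    define q :: real where "q = of_nat m + 1"
    have ne: "q \<noteq> 0" unfolding q_def by (simp add: add_pos_nonneg)
    have e: "q powi (k-1) = q powi k / q"
      using ne by (simp add: power_int_diff)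
    have pk: "q powi k \<noteq> 0" using ne by simp
    have l: "fps_nth (fps_X * fps_deriv (Lif_fps k)) m = of_nat m * fps_nth (Lif_fps k) m"
      using Suc by (simp add: fps_deriv_nth del: of_nat_Suc)
    also have "\<dots> = of_nat m / (fact m * q powi k)" by (simp add: Lif_fps_def q_def add.commute)
    finally have l2: "fps_nth (fps_X * fps_deriv (Lif_fps k)) m = of_nat m / (fact m * q powi k)" .
    have r: "fps_nth (Lif_fps (k-1) - Lif_fps k) m = 1/(fact m * (q powi k / q)) - 1/(fact m * q powi k)"
    proof -
      have q': "1 + real m = q" by (simp add: q_def)
      show ?thesis by (simp add: Lif_fps_def q' e)
    qed
    have fm: "(fact m :: real) \<noteq> 0" by simp
    have "1/(fact m * (q powi k / q)) - 1/(fact m * q powi k) = (q - 1) / (fact m * q powi k)"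
      using ne pk fm by (simp add: field_simps)
    also have "q - 1 = of_nat m" by (simp add: q_def)
    finally show ?thesis using l2 r by simp
  qed
qed

abbreviation "CC k \<equiv> (Lif_fps k oo (- fps_ln 1) :: real fps)"

lemma hC: "fps_deriv (CC k) = (fps_deriv (Lif_fps k) oo (- LL)) * (- inverse (1 + fps_X))"
  by (simp add: fps_compose_deriv hLd)

lemma h3: "(- LL) * (fps_deriv (Lif_fps k) oo (- LL)) = CC (k-1) - CC k"
proof -
  have "(fps_X * fps_deriv (Lif_fps k)) oo (- LL) = (fps_X oo (- LL)) * (fps_deriv (Lif_fps k) oo (- LL))"
    by (rule fps_compose_mult_distrib) simp
  also have "fps_X oo (- LL) = - LL" by simp
  finally show ?thesis by (simp add: hLif fps_compose_sub_distrib)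
qed

lemma h2: "fps_X * PP * LL = fps_X^2 * inverse (1 + fps_X)"
proof -
  have "fps_X * PP * LL * ((1 + fps_X) * inverse (1 + fps_X)) = fps_X * (PP * ((1 + fps_X) * LL)) * inverse (1 + fps_X)"
    by (simp add: ac_simps)
  thus ?thesis by (simp add: hI hP power2_eq_square)
qed

lemma gf_deriv:
  "fps_X^2 * fps_deriv (Atilde_gf (Suc s) k x) =
     fps_const x * fps_X^2 * Atilde_gf (Suc s) k (x-1)
   + fps_const (of_nat (Suc s)) * (LL - fps_X) * Atilde_gf (Suc (Suc s)) k x
   + fps_X * (Atilde_gf (Suc (Suc s)) (k-1) x - Atilde_gf (Suc (Suc s)) k x)"
proof -
  have d: "fps_deriv (Atilde_gf (Suc s) k x) =
      fps_const (of_nat (Suc s)) * fps_deriv PP * PP^s * CC k * fps_binomial x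
    + PP^(Suc s) * ((fps_deriv (Lif_fps k) oo (- LL)) * (- inverse (1 + fps_X))) * fps_binomial x
    + PP^(Suc s) * CC k * (fps_const x * fps_binomial (x-1))"
    unfolding Atilde_gf_def by (simp only: fps_deriv_mult fps_deriv_power' hC hBd diff_Suc_1 fps_of_nat[symmetric]) (simp add: algebra_simps del: of_nat_Suc)
  show ?thesis unfolding d
    using ring_main[OF hPd h2 h3, where R="fps_const (of_nat (Suc s))" and s=s and B="fps_binomial x" and xc="fps_const x" and Bm="fps_binomial (x-1)"]
    by (simp add: Atilde_gf_def ac_simps del: of_nat_Suc)
qed

lemma sum_coeff:
  "fps_nth ((LL - fps_X) * G) (Suc (Suc m)) =
     (\<Sum>a = 0..m. (-1) ^ (a + 1) / (of_nat a + 2) * fps_nth G (m - a))"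
proof -
  have "fps_nth ((LL - fps_X) * G) (Suc (Suc m)) =
        (\<Sum>i = 0..Suc (Suc m). fps_nth (LL - fps_X) i * fps_nth G (Suc (Suc m) - i))"
    by (simp add: fps_mult_nth)
  also have "\<dots> = (\<Sum>a = 0..m. fps_nth (LL - fps_X) (Suc (Suc a)) * fps_nth G (m - a))"
    by (simp only: sum.atLeast0_atMost_Suc_shift) (simp add: fps_ln_nth)
  also have "\<dots> = (\<Sum>a = 0..m. (-1) ^ (a + 1) / (of_nat a + 2) * fps_nth G (m - a))"
    by (rule sum.cong) (simp_all add: fps_ln_nth add.commute)
  finally show ?thesis .
qed

theorem theorem5:
  fixes n r :: nat and k :: int and x :: real
  assumes "n \<ge> 1" and "r \<ge> 1"
  shows "Atilde n r k x =
      x * Atilde (n - 1) r k (x - 1)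
    + of_nat r * (\<Sum>a = 0..n - 1. (-1) ^ (a + 1) * fact a / (of_nat a + 2)
                     * of_nat ((n - 1) choose a) * Atilde (n - 1 - a) (r + 1) k x)
    + (1 / of_nat n) * (Atilde n (r + 1) (k - 1) x - Atilde n (r + 1) k x)"
proof -
  obtain m where n: "n = Suc m" using assms(1) by (cases n) auto
  obtain s where r: "r = Suc s" using assms(2) by (cases r) auto
  define F where "F = Atilde_gf (Suc s) k x"
  define F1 where "F1 = Atilde_gf (Suc s) k (x-1)"
  define G where "G = Atilde_gf (Suc (Suc s)) k x"
  define G2 where "G2 = Atilde_gf (Suc (Suc s)) (k-1) x"
  have eq: "fps_nth (fps_X^2 * fps_deriv F) (Suc (Suc m)) =
     fps_nth (fps_const x * fps_X^2 * F1
   + fps_const (of_nat (Suc s)) * (LL - fps_X) * G + fps_X * (G2 - G)) (Suc (Suc m))"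
    unfolding F_def F1_def G_def G2_def gf_deriv by simp
  have lhs: "fps_nth (fps_X^2 * fps_deriv F) (Suc (Suc m)) = of_nat (Suc m) * fps_nth F (Suc m)"
    by (simp add: fps_X_power_mult_nth fps_deriv_nth)
  have rhs: "fps_nth (fps_const x * fps_X^2 * F1
   + fps_const (of_nat (Suc s)) * (LL - fps_X) * G + fps_X * (G2 - G)) (Suc (Suc m))
   = x * fps_nth F1 m + of_nat (Suc s) * (\<Sum>a = 0..m. (-1) ^ (a + 1) / (of_nat a + 2) * fps_nth G (m - a))
     + (fps_nth G2 (Suc m) - fps_nth G (Suc m))"
    by (simp add: fps_X_power_mult_nth mult.assoc sum_coeff del: of_nat_Suc)
  have key: "of_nat (Suc m) * fps_nth F (Suc m) = x * fps_nth F1 m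
     + of_nat (Suc s) * (\<Sum>a = 0..m. (-1) ^ (a + 1) / (of_nat a + 2) * fps_nth G (m - a))
     + (fps_nth G2 (Suc m) - fps_nth G (Suc m))"
    using eq lhs rhs by simp
  have summ: "(\<Sum>a = 0..n - 1. (-1) ^ (a + 1) * fact a / (of_nat a + 2)
                     * of_nat ((n - 1) choose a) * Atilde (n - 1 - a) (r + 1) k x)
        = fact m * (\<Sum>a = 0..m. (-1) ^ (a + 1) / (of_nat a + 2) * fps_nth G (m - a))"
    unfolding sum_distrib_left n r diff_Suc_1
  proof (rule sum.cong)
    fix a assume "a \<in> {0..m}"
    hence "fact a * fact (m - a) * (m choose a) = (fact m :: nat)" by (simp add: binomial_fact_lemma)
    hence f: "fact a * fact (m - a) * real (m choose a) = fact m"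
      by (metis of_nat_fact of_nat_mult)
    show "(-1) ^ (a + 1) * fact a / (of_nat a + 2) * of_nat (m choose a) * Atilde (m - a) (Suc s + 1) k x
        = fact m * ((-1) ^ (a + 1) / (of_nat a + 2) * fps_nth G (m - a))"
      by (simp add: Atilde_def G_def f[symmetric] field_simps)
  qed simp
  have "Atilde n r k x = fact m * (of_nat (Suc m) * fps_nth F (Suc m))"
    by (simp add: Atilde_def n r F_def fact_Suc del: of_nat_Suc)
  also have "\<dots> = fact m * (x * fps_nth F1 m
     + of_nat (Suc s) * (\<Sum>a = 0..m. (-1) ^ (a + 1) / (of_nat a + 2) * fps_nth G (m - a))
     + (fps_nth G2 (Suc m) - fps_nth G (Suc m)))" by (simp only: key)
  also have "\<dots> = x * Atilde (n - 1) r k (x - 1)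
    + of_nat r * (fact m * (\<Sum>a = 0..m. (-1) ^ (a + 1) / (of_nat a + 2) * fps_nth G (m - a)))
    + (1 / of_nat n) * (Atilde n (r + 1) (k - 1) x - Atilde n (r + 1) k x)"
    unfolding Atilde_def n r diff_Suc_1 Suc_eq_plus1[symmetric]
    by (simp add: F1_def G_def G2_def fact_Suc field_simps del: of_nat_Suc)
  also have "\<dots> = x * Atilde (n - 1) r k (x - 1)
    + of_nat r * (\<Sum>a = 0..n - 1. (-1) ^ (a + 1) * fact a / (of_nat a + 2)
                     * of_nat ((n - 1) choose a) * Atilde (n - 1 - a) (r + 1) k x)
    + (1 / of_nat n) * (Atilde n (r + 1) (k - 1) x - Atilde n (r + 1) k x)"
    by (simp only: summ)
  finally show ?thesis .
qed

end
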